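(* Let $\mu\ne\delta_{\mathbf 0}$ be a probability measure on $\mathbb{R}^d$ with $\int\|\mathbf x\|^2d\mu<\infty$ and $\int\mathbf x\,d\mu=\mathbf 0$, and let $(\boldsymbol\Theta_n)_{n\ge1}$ be i.i.d. $\mu$-distributed random vectors. Let $(r_n)_{n\ge1}\in\ell^2$ be a real sequence with infinitely many nonzero terms. Then $\sum_{n=1}^\infty r_n\boldsymbol\Theta_n$ converges almost surely, and for every $\mathbf x\in\mathbb{R}^d$, $\mathbb P\big(\sum_{n=1}^\infty r_n\boldsymbol\Theta_n=\mathbf x\big)=0$. *)

theory Defs
  imports "HOL-Probability.Probability"
begin

end

theory Submission
  imports Defs
begin


lemma (in prob_space) indep_prod_zero:
  fixes X :: "nat \<Rightarrow> 'a \<Rightarrow> real"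
  assumes ind: "indep_vars (\<lambda>_. borel) X UNIV"
    and g: "g \<in> borel_measurable (PiM {..<j} (\<lambda>_. borel))"
    and intg: "integrable M (\<lambda>\<omega>. g (restrict (\<lambda>i. X i \<omega>) {..<j}))"
    and intX: "integrable M (X j)" and mean: "expectation (X j) = 0"
  shows "integrable M (\<lambda>\<omega>. g (restrict (\<lambda>i. X i \<omega>) {..<j}) * X j \<omega>)"
    and "expectation (\<lambda>\<omega>. g (restrict (\<lambda>i. X i \<omega>) {..<j}) * X j \<omega>) = 0"
proof -
  have iv: "indep_var (PiM {..<j} (\<lambda>_. borel)) (\<lambda>\<omega>. restrict (\<lambda>i. X i \<omega>) {..<j}) (PiM {j} (\<lambda>_. borel)) (\<lambda>\<omega>. restrict (\<lambda>i. X i \<omega>) {j})"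
    by (rule indep_var_restrict[OF ind]) auto
  have ev: "(\<lambda>v. v j) \<in> measurable (PiM {j} (\<lambda>_. borel)) borel"
    by (rule measurable_component_singleton) auto
  have iv2: "indep_var borel (g \<circ> (\<lambda>\<omega>. restrict (\<lambda>i. X i \<omega>) {..<j})) borel ((\<lambda>v. v j) \<circ> (\<lambda>\<omega>. restrict (\<lambda>i. X i \<omega>) {j}))"
    by (rule indep_var_compose[OF iv g ev])
  have eq: "((\<lambda>v. v j) \<circ> (\<lambda>\<omega>. restrict (\<lambda>i. X i \<omega>) {j})) = X j" by (auto simp: fun_eq_iff)
  have iv3: "indep_var borel (\<lambda>\<omega>. g (restrict (\<lambda>i. X i \<omega>) {..<j})) borel (X j)"
    using iv2 unfolding eq by (simp add: comp_def)
  show "integrable M (\<lambda>\<omega>. g (restrict (\<lambda>i. X i \<omega>) {..<j}) * X j \<omega>)"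
    by (rule indep_var_integrable[OF iv3 intg intX])
  show "expectation (\<lambda>\<omega>. g (restrict (\<lambda>i. X i \<omega>) {..<j}) * X j \<omega>) = 0"
    using indep_var_lebesgue_integral[OF iv3 intg intX] mean by simp
qed

lemma meas_sum_coord:
  fixes c :: "nat \<Rightarrow> real"
  assumes "A \<subseteq> I"
  shows "(\<lambda>v. \<Sum>i\<in>A. c i *\<^sub>R (v i :: 'b::euclidean_space)) \<in> borel_measurable (PiM I (\<lambda>_. borel))"
proof (rule borel_measurable_sum)
  fix i assume "i \<in> A"
  then have "(\<lambda>v. v i) \<in> measurable (PiM I (\<lambda>_. borel)) (borel :: 'b measure)"
    using assms by (intro measurable_component_singleton) auto
  then show "(\<lambda>v. c i *\<^sub>R (v i :: 'b)) \<in> borel_measurable (PiM I (\<lambda>_. borel))"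
    by measurable
qed

lemma meas_sum_coord_real:
  fixes A :: "nat set"
  assumes "A \<subseteq> I"
  shows "(\<lambda>v. \<Sum>i\<in>A. (v i :: real)) \<in> borel_measurable (PiM I (\<lambda>_. borel))"
  using meas_sum_coord[OF assms, of "\<lambda>_. 1"] by simp

lemma coord_meas:
  "(\<lambda>v. v j) \<in> borel_measurable (PiM I (\<lambda>_. borel :: 'b::topological_space measure))"
proof (cases "j \<in> I")
  case True then show ?thesis by (rule measurable_component_singleton)
next
  case False
  show ?thesis
    by (subst measurable_cong[where g="\<lambda>v. undefined"]) (auto simp: space_PiM PiE_arb[OF _ False])
qed

lemma sq_le_abs: "0 < e \<Longrightarrow> e \<le> \<bar>x\<bar> \<Longrightarrow> e\<^sup>2 \<le> (x::real)\<^sup>2"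
  by (metis power2_abs power_mono less_le)

locale kolm = prob_space +
  fixes X :: "nat \<Rightarrow> 'a \<Rightarrow> real"
  assumes ind: "indep_vars (\<lambda>_. borel) X UNIV"
    and intX: "\<And>i. integrable M (X i)"
    and mean: "\<And>i. expectation (X i) = 0"
    and int2: "\<And>i. integrable M (\<lambda>\<omega>. (X i \<omega>)\<^sup>2)"
begin

lemma Xm[measurable]: "X i \<in> borel_measurable M"
  using ind unfolding indep_vars_def by auto

definition S :: "nat \<Rightarrow> nat \<Rightarrow> 'a \<Rightarrow> real" where
  "S m k \<omega> = (\<Sum>i\<in>{m..<k}. X i \<omega>)"

lemma Sm[measurable]: "S m k \<in> borel_measurable M"
  unfolding S_def by measurable

lemma S_int: "integrable M (S m k)"
  unfolding S_def by (auto intro!: integrable_sum intX)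

lemma S_restrict: "k \<le> j \<Longrightarrow> S m k \<omega> = (\<lambda>v. \<Sum>i\<in>{m..<k}. v i) (restrict (\<lambda>i. X i \<omega>) {..<j})"
  unfolding S_def by (auto intro!: sum.cong)

lemma var_sum:
  "integrable M (\<lambda>\<omega>. (S m n \<omega>)\<^sup>2) \<and> expectation (\<lambda>\<omega>. (S m n \<omega>)\<^sup>2) = (\<Sum>i\<in>{m..<n}. expectation (\<lambda>\<omega>. (X i \<omega>)\<^sup>2))"
proof (induction n)
  case 0
  then show ?case by (simp add: S_def)
next
  case (Suc n)
  show ?case
  proof (cases "m \<le> n")
    case False
    then have "{m..<Suc n} = {}" by auto
    then show ?thesis by (simp add: S_def)
  next
    case True
    have SS: "S m (Suc n) \<omega> = S m n \<omega> + X n \<omega>" for \<omega>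
      using True by (simp add: S_def)
    have g: "(\<lambda>v. \<Sum>i\<in>{m..<n}. (v i :: real)) \<in> borel_measurable (PiM {..<n} (\<lambda>_. borel))"
      using meas_sum_coord_real[of "{m..<n}" "{..<n}"] by auto
    have gi: "integrable M (\<lambda>\<omega>. (\<lambda>v. \<Sum>i\<in>{m..<n}. v i) (restrict (\<lambda>i. X i \<omega>) {..<n}))"
    proof -
      have "(\<lambda>\<omega>. (\<lambda>v. \<Sum>i\<in>{m..<n}. v i) (restrict (\<lambda>i. X i \<omega>) {..<n})) = S m n"
        by (auto simp: S_def fun_eq_iff)
      then show ?thesis using S_int by simp
    qed
    note ip = indep_prod_zero[OF ind g gi intX mean]
    have ip1: "integrable M (\<lambda>\<omega>. S m n \<omega> * X n \<omega>)" and ip2: "expectation (\<lambda>\<omega>. S m n \<omega> * X n \<omega>) = 0"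
    proof -
      have "(\<lambda>\<omega>. (\<lambda>v. \<Sum>i\<in>{m..<n}. v i) (restrict (\<lambda>i. X i \<omega>) {..<n})) = S m n"
        by (auto simp: S_def fun_eq_iff)
      then show "integrable M (\<lambda>\<omega>. S m n \<omega> * X n \<omega>)" "expectation (\<lambda>\<omega>. S m n \<omega> * X n \<omega>) = 0"
        using ip by (simp_all add: fun_eq_iff)
    qed
    have eq: "(\<lambda>\<omega>. (S m (Suc n) \<omega>)\<^sup>2) = (\<lambda>\<omega>. (S m n \<omega>)\<^sup>2 + 2 * (S m n \<omega> * X n \<omega>) + (X n \<omega>)\<^sup>2)"
      by (auto simp: SS power2_sum fun_eq_iff)
    have i1: "integrable M (\<lambda>\<omega>. (S m n \<omega>)\<^sup>2)" using Suc.IH by auto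
    show ?thesis
      unfolding eq using Suc.IH ip1 ip2 True i1 int2[of n]
      by (simp add: Bochner_Integration.integral_add integrable_mult_right)
  qed
qed

lemma kolm_ineq:
  assumes eps: "\<epsilon> > 0"
  shows "prob {\<omega>\<in>space M. \<exists>k\<in>{m..n}. \<epsilon> \<le> \<bar>S m k \<omega>\<bar>}
           \<le> (\<Sum>i\<in>{m..<n}. expectation (\<lambda>\<omega>. (X i \<omega>)\<^sup>2)) / \<epsilon>\<^sup>2"
proof -
  define A where "A k = {\<omega>\<in>space M. \<epsilon> \<le> \<bar>S m k \<omega>\<bar> \<and> (\<forall>l\<in>{m..<k}. \<bar>S m l \<omega>\<bar> < \<epsilon>)}" for k
  have Am[measurable]: "A k \<in> events" for k unfolding A_def by measurable
  have disj: "disjoint_family_on A {m..n}"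
    unfolding disjoint_family_on_def
  proof (intro ballI impI)
    fix k k' assume k: "k \<in> {m..n}" "k' \<in> {m..n}" "k \<noteq> k'"
    show "A k \<inter> A k' = {}"
    proof (rule ccontr)
      assume "A k \<inter> A k' \<noteq> {}"
      then obtain \<omega> where w: "\<omega> \<in> A k" "\<omega> \<in> A k'" by blast
      show False
      proof (cases "k < k'")
        case True then have "k \<in> {m..<k'}" using k by auto
        then show False using w by (force simp: A_def)
      next
        case False then have "k' \<in> {m..<k}" using k by auto
        then show False using w by (force simp: A_def)
      qed
    qed
  qed
  have U: "{\<omega>\<in>space M. \<exists>k\<in>{m..n}. \<epsilon> \<le> \<bar>S m k \<omega>\<bar>} = (\<Union>k\<in>{m..n}. A k)"
  proof (intro equalityI subsetI)
    fix \<omega> assume "\<omega> \<in> {\<omega>\<in>space M. \<exists>k\<in>{m..n}. \<epsilon> \<le> \<bar>S m k \<omega>\<bar>}"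
    then have w: "\<omega> \<in> space M" and ex: "\<exists>k. k\<in>{m..n} \<and> \<epsilon> \<le> \<bar>S m k \<omega>\<bar>" by auto
    obtain k where k: "k\<in>{m..n} \<and> \<epsilon> \<le> \<bar>S m k \<omega>\<bar>"
      and min: "\<forall>l<k. \<not> (l\<in>{m..n} \<and> \<epsilon> \<le> \<bar>S m l \<omega>\<bar>)"
      using ex exists_least_iff[of "\<lambda>k. k\<in>{m..n} \<and> \<epsilon> \<le> \<bar>S m k \<omega>\<bar>"] by blast
    then have "\<omega> \<in> A k" using w by (auto simp: A_def not_le)
    then show "\<omega> \<in> (\<Union>k\<in>{m..n}. A k)" using k by auto
  qed (auto simp: A_def)
  have Sn2: "integrable M (\<lambda>\<omega>. (S m n \<omega>)\<^sup>2)" using var_sum by auto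
  have key: "\<epsilon>\<^sup>2 * prob (A k) \<le> expectation (\<lambda>\<omega>. (S m n \<omega>)\<^sup>2 * indicator (A k) \<omega>)"
    if k: "k \<in> {m..n}" for k
  proof -
    have Ak: "A k \<inter> space M = A k" by (auto simp: A_def)
    have "\<epsilon>\<^sup>2 * prob (A k) = expectation (\<lambda>\<omega>. \<epsilon>\<^sup>2 * indicator (A k) \<omega>)"
      by (simp add: Ak)
    also have "\<dots> \<le> expectation (\<lambda>\<omega>. (S m k \<omega>)\<^sup>2 * indicator (A k) \<omega>)"
    proof (rule integral_mono)
      show "integrable M (\<lambda>\<omega>. \<epsilon>\<^sup>2 * indicator (A k) \<omega>)"
        by (intro integrable_real_mult_indicator) auto
      show "integrable M (\<lambda>\<omega>. (S m k \<omega>)\<^sup>2 * indicator (A k) \<omega>)"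
        using var_sum by (intro integrable_real_mult_indicator) auto
      fix \<omega> show "\<epsilon>\<^sup>2 * indicator (A k) \<omega> \<le> (S m k \<omega>)\<^sup>2 * indicator (A k) \<omega>"
        using sq_le_abs[OF eps] by (auto simp: A_def indicator_def)
    qed
    also have "\<dots> \<le> expectation (\<lambda>\<omega>. (S m n \<omega>)\<^sup>2 * indicator (A k) \<omega>)"
    proof -
      have Sn: "S m n \<omega> = S m k \<omega> + S k n \<omega>" for \<omega>
        using k by (simp add: S_def sum.atLeastLessThan_concat)
      define Y where "Y \<omega> = S m k \<omega> * indicator (A k) \<omega>" for \<omega>
      have Yint: "integrable M Y" unfolding Y_def
        using S_int by (intro integrable_real_mult_indicator) auto
      have cross: "integrable M (\<lambda>\<omega>. Y \<omega> * X i \<omega>) \<and> expectation (\<lambda>\<omega>. Y \<omega> * X i \<omega>) = 0"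
        if i: "i \<in> {k..<n}" for i
      proof -
        define P where "P v \<longleftrightarrow> \<epsilon> \<le> \<bar>\<Sum>j\<in>{m..<k}. v j\<bar> \<and> (\<forall>l\<in>{m..<k}. \<bar>\<Sum>j\<in>{m..<l}. v j\<bar> < \<epsilon>)"
          for v :: "nat \<Rightarrow> real"
        define g where "g v = (\<Sum>j\<in>{m..<k}. v j) * (if P v then 1 else 0)" for v :: "nat \<Rightarrow> real"
        note coord_meas[measurable]
        have gm: "g \<in> borel_measurable (PiM {..<i} (\<lambda>_. borel))" unfolding g_def P_def by measurable
        have rs: "(\<Sum>j\<in>{m..<l}. restrict (\<lambda>j. X j \<omega>) {..<i} j) = S m l \<omega>" if "l \<le> i" for l \<omega>
          using that by (auto simp: S_def intro!: sum.cong)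
        have geq: "g (restrict (\<lambda>j. X j \<omega>) {..<i}) = Y \<omega>" if "\<omega> \<in> space M" for \<omega>
        proof -
          have "P (restrict (\<lambda>j. X j \<omega>) {..<i}) \<longleftrightarrow> \<omega> \<in> A k"
            unfolding P_def A_def using i that rs by auto
          then show ?thesis using rs[of k \<omega>] i by (auto simp: g_def Y_def indicator_def)
        qed
        have gint: "integrable M (\<lambda>\<omega>. g (restrict (\<lambda>j. X j \<omega>) {..<i}))"
          using Yint by (subst Bochner_Integration.integrable_cong[OF refl geq]) auto
        note ip = indep_prod_zero[OF ind gm gint intX mean]
        have e1: "\<And>\<omega>. \<omega> \<in> space M \<Longrightarrow> g (restrict (\<lambda>j. X j \<omega>) {..<i}) * X i \<omega> = Y \<omega> * X i \<omega>"
          using geq by simp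
        have "integrable M (\<lambda>\<omega>. Y \<omega> * X i \<omega>)"
        proof -
          have "integrable M (\<lambda>\<omega>. g (restrict (\<lambda>j. X j \<omega>) {..<i}) * X i \<omega>) \<longleftrightarrow> integrable M (\<lambda>\<omega>. Y \<omega> * X i \<omega>)"
            by (rule Bochner_Integration.integrable_cong) (simp_all only: e1)
          then show ?thesis using ip(1) by blast
        qed
        moreover have "expectation (\<lambda>\<omega>. Y \<omega> * X i \<omega>) = 0"
        proof -
          have "expectation (\<lambda>\<omega>. g (restrict (\<lambda>j. X j \<omega>) {..<i}) * X i \<omega>) = expectation (\<lambda>\<omega>. Y \<omega> * X i \<omega>)"
            by (rule Bochner_Integration.integral_cong) (simp_all only: e1)
          then show ?thesis using ip(2) by simp
        qed
        ultimately show ?thesis by simp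
      qed
      have YS: "Y \<omega> * S k n \<omega> = (\<Sum>i\<in>{k..<n}. Y \<omega> * X i \<omega>)" for \<omega>
        by (simp add: S_def sum_distrib_left)
      have YSi: "integrable M (\<lambda>\<omega>. Y \<omega> * S k n \<omega>)"
        unfolding YS using cross by (intro Bochner_Integration.integrable_sum) auto
      have YSe: "expectation (\<lambda>\<omega>. Y \<omega> * S k n \<omega>) = 0"
        unfolding YS using cross by (subst Bochner_Integration.integral_sum) auto
      have i1: "integrable M (\<lambda>\<omega>. (S m k \<omega>)\<^sup>2 * indicator (A k) \<omega>)"
        using var_sum by (intro integrable_real_mult_indicator) auto
      have "expectation (\<lambda>\<omega>. (S m k \<omega>)\<^sup>2 * indicator (A k) \<omega>)
          = expectation (\<lambda>\<omega>. (S m k \<omega>)\<^sup>2 * indicator (A k) \<omega> + 2 * (Y \<omega> * S k n \<omega>))"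
        using i1 YSi YSe by simp
      also have "\<dots> \<le> expectation (\<lambda>\<omega>. (S m n \<omega>)\<^sup>2 * indicator (A k) \<omega>)"
      proof (rule integral_mono)
        show "integrable M (\<lambda>\<omega>. (S m k \<omega>)\<^sup>2 * indicator (A k) \<omega> + 2 * (Y \<omega> * S k n \<omega>))"
          using i1 YSi by auto
        show "integrable M (\<lambda>\<omega>. (S m n \<omega>)\<^sup>2 * indicator (A k) \<omega>)"
          using Sn2 by (intro integrable_real_mult_indicator) auto
        fix \<omega>
        have "(S m k \<omega>)\<^sup>2 + 2 * (S m k \<omega> * S k n \<omega>) \<le> (S m k \<omega> + S k n \<omega>)\<^sup>2"
          by (simp add: power2_sum)
        then show "(S m k \<omega>)\<^sup>2 * indicator (A k) \<omega> + 2 * (Y \<omega> * S k n \<omega>) \<le> (S m n \<omega>)\<^sup>2 * indicator (A k) \<omega>"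
          unfolding Sn Y_def by (auto simp: indicator_def)
      qed
      finally show ?thesis .
    qed
    finally show ?thesis .
  qed
  have "\<epsilon>\<^sup>2 * prob {\<omega>\<in>space M. \<exists>k\<in>{m..n}. \<epsilon> \<le> \<bar>S m k \<omega>\<bar>} = (\<Sum>k\<in>{m..n}. \<epsilon>\<^sup>2 * prob (A k))"
    unfolding U by (subst finite_measure_finite_Union) (auto simp: disj sum_distrib_left)
  also have "\<dots> \<le> (\<Sum>k\<in>{m..n}. expectation (\<lambda>\<omega>. (S m n \<omega>)\<^sup>2 * indicator (A k) \<omega>))"
    by (rule sum_mono) (rule key)
  also have "\<dots> = expectation (\<lambda>\<omega>. (\<Sum>k\<in>{m..n}. (S m n \<omega>)\<^sup>2 * indicator (A k) \<omega>))"
    using Sn2 by (subst Bochner_Integration.integral_sum) (auto intro!: integrable_real_mult_indicator)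
  also have "\<dots> = expectation (\<lambda>\<omega>. (S m n \<omega>)\<^sup>2 * indicator (\<Union>k\<in>{m..n}. A k) \<omega>)"
    by (simp add: indicator_UN_disjoint[OF _ disj] sum_distrib_left)
  also have "\<dots> \<le> expectation (\<lambda>\<omega>. (S m n \<omega>)\<^sup>2)"
    using Sn2 by (intro integral_mono integrable_real_mult_indicator) (auto simp: indicator_def)
  also have "\<dots> = (\<Sum>i\<in>{m..<n}. expectation (\<lambda>\<omega>. (X i \<omega>)\<^sup>2))"
    using var_sum by auto
  finally show ?thesis using eps by (simp add: pos_le_divide_eq mult.commute)
qed

lemma kolm_tail:
  assumes sm: "summable (\<lambda>i. expectation (\<lambda>\<omega>. (X i \<omega>)\<^sup>2))" and eps: "\<epsilon> > 0"
  shows "prob {\<omega>\<in>space M. \<exists>k. \<epsilon> \<le> \<bar>S m (m + k) \<omega>\<bar>}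
           \<le> (\<Sum>i. expectation (\<lambda>\<omega>. (X (i + m) \<omega>)\<^sup>2)) / \<epsilon>\<^sup>2"
proof -
  define v where "v i = expectation (\<lambda>\<omega>. (X i \<omega>)\<^sup>2)" for i
  have v0: "v i \<ge> 0" for i unfolding v_def by simp
  have smm: "summable (\<lambda>i. v (i + m))" using sm unfolding v_def by (subst summable_iff_shift) 
  define B where "B n = {\<omega>\<in>space M. \<exists>k\<in>{m..n}. \<epsilon> \<le> \<bar>S m k \<omega>\<bar>}" for n
  have Bm': "B n \<in> events" for n unfolding B_def by measurable
  then have Bm: "range B \<subseteq> events" by auto
  have Binc: "incseq B" unfolding B_def incseq_def by auto
  have BU: "(\<Union>n. B n) = {\<omega>\<in>space M. \<exists>k. \<epsilon> \<le> \<bar>S m (m + k) \<omega>\<bar>}"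
  proof (intro equalityI subsetI)
    fix \<omega> assume "\<omega> \<in> (\<Union>n. B n)"
    then obtain n k where "\<omega> \<in> space M" "k \<in> {m..n}" "\<epsilon> \<le> \<bar>S m k \<omega>\<bar>" unfolding B_def by auto
    then show "\<omega> \<in> {\<omega>\<in>space M. \<exists>k. \<epsilon> \<le> \<bar>S m (m + k) \<omega>\<bar>}"
      by (auto intro!: exI[of _ "k - m"])
  next
    fix \<omega> assume "\<omega> \<in> {\<omega>\<in>space M. \<exists>k. \<epsilon> \<le> \<bar>S m (m + k) \<omega>\<bar>}"
    then obtain k where "\<omega> \<in> space M" "\<epsilon> \<le> \<bar>S m (m + k) \<omega>\<bar>" by auto
    then have "\<omega> \<in> B (m + k)" unfolding B_def by (auto intro!: bexI[of _ "m + k"])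
    then show "\<omega> \<in> (\<Union>n. B n)" by auto
  qed
  have bnd: "prob (B n) \<le> (\<Sum>i. v (i + m)) / \<epsilon>\<^sup>2" for n
  proof -
    have "(\<Sum>i\<in>{m..<n}. v i) \<le> (\<Sum>i. v (i + m))"
    proof (cases "m \<le> n")
      case True
      have "(\<Sum>i\<in>{m..<n}. v i) = (\<Sum>i<n - m. v (i + m))"
        using True by (subst sum.atLeastLessThan_shift_0) (auto simp: atLeast0LessThan add.commute)
      also have "\<dots> \<le> (\<Sum>i. v (i + m))"
        using smm v0 by (intro sum_le_suminf) auto
      finally show ?thesis .
    next
      case False then show ?thesis using smm v0 by (auto intro!: suminf_nonneg)
    qed
    then have "(\<Sum>i\<in>{m..<n}. v i) / \<epsilon>\<^sup>2 \<le> (\<Sum>i. v (i + m)) / \<epsilon>\<^sup>2"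
      by (intro divide_right_mono) auto
    then show ?thesis using kolm_ineq[OF eps, of m n] unfolding B_def v_def by linarith
  qed
  have "(\<lambda>n. prob (B n)) \<longlonglongrightarrow> prob (\<Union>n. B n)"
    by (rule finite_Lim_measure_incseq[OF Bm Binc])
  then have "prob (\<Union>n. B n) \<le> (\<Sum>i. v (i + m)) / \<epsilon>\<^sup>2"
    by (rule LIMSEQ_le_const2) (auto intro: bnd)
  then show ?thesis unfolding BU v_def .
qed

lemma kolm_as:
  assumes sm: "summable (\<lambda>i. expectation (\<lambda>\<omega>. (X i \<omega>)\<^sup>2))"
  shows "AE \<omega> in M. summable (\<lambda>i. X i \<omega>)"
proof -
  have ae: "AE \<omega> in M. \<exists>m. \<forall>k\<ge>m. \<bar>S m k \<omega>\<bar> < \<epsilon>" if eps: "\<epsilon> > 0" for \<epsilon>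
  proof (rule AE_I')
    define N where "N = {\<omega>\<in>space M. \<forall>m. \<exists>k. \<epsilon> \<le> \<bar>S m (m + k) \<omega>\<bar>}"
    have Nm: "N \<in> events" unfolding N_def by measurable
    have "prob N \<le> r" if r: "r > 0" for r
    proof -
      have "r * \<epsilon>\<^sup>2 > 0" using r eps by simp
      from suminf_exist_split[OF this sm] obtain m where
        m: "norm (\<Sum>i. expectation (\<lambda>\<omega>. (X (i + m) \<omega>)\<^sup>2)) < r * \<epsilon>\<^sup>2" by auto
      have "N \<subseteq> {\<omega>\<in>space M. \<exists>k. \<epsilon> \<le> \<bar>S m (m + k) \<omega>\<bar>}" unfolding N_def by auto
      moreover have "{\<omega>\<in>space M. \<exists>k. \<epsilon> \<le> \<bar>S m (m + k) \<omega>\<bar>} \<in> events" by measurable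
      ultimately have "prob N \<le> prob {\<omega>\<in>space M. \<exists>k. \<epsilon> \<le> \<bar>S m (m + k) \<omega>\<bar>}"
        by (rule finite_measure_mono)
      also have "\<dots> \<le> (\<Sum>i. expectation (\<lambda>\<omega>. (X (i + m) \<omega>)\<^sup>2)) / \<epsilon>\<^sup>2"
        by (rule kolm_tail[OF sm eps])
      also have "\<dots> \<le> r" using m eps by (simp add: divide_le_eq)
      finally show ?thesis .
    qed
    then have "prob N \<le> 0" by (rule field_le_epsilon[of "prob N" 0, simplified]) 
    then have "prob N = 0" using measure_nonneg[of M N] by linarith
    then show "N \<in> null_sets M" using Nm by (auto simp: emeasure_eq_measure)
    show "{\<omega> \<in> space M. \<not> (\<exists>m. \<forall>k\<ge>m. \<bar>S m k \<omega>\<bar> < \<epsilon>)} \<subseteq> N"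
      unfolding N_def by (auto simp: not_less) (metis le_add_diff_inverse)
  qed
  have "AE \<omega> in M. \<forall>j::nat. \<exists>m. \<forall>k\<ge>m. \<bar>S m k \<omega>\<bar> < inverse (real (Suc j))"
    by (subst AE_all_countable) (auto intro!: ae)
  then show ?thesis
  proof (rule AE_mp, intro AE_I2 impI)
    fix \<omega> assume H: "\<forall>j::nat. \<exists>m. \<forall>k\<ge>m. \<bar>S m k \<omega>\<bar> < inverse (real (Suc j))"
    show "summable (\<lambda>i. X i \<omega>)"
      unfolding summable_Cauchy
    proof (intro allI impI)
      fix e :: real assume e: "e > 0"
      then obtain j where j: "inverse (real (Suc j)) < e / 2" using reals_Archimedean[of "e/2"] by auto
      obtain m where m: "\<forall>k\<ge>m. \<bar>S m k \<omega>\<bar> < inverse (real (Suc j))" using H by blast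
      show "\<exists>N. \<forall>m'\<ge>N. \<forall>n. norm (\<Sum>i\<in>{m'..<n}. X i \<omega>) < e"
      proof (intro exI allI impI)
        fix m' n assume m': "m \<le> m'"
        show "norm (\<Sum>i\<in>{m'..<n}. X i \<omega>) < e"
        proof (cases "m' \<le> n")
          case False then show ?thesis using e by simp
        next
          case True
          have "S m n \<omega> = S m m' \<omega> + (\<Sum>i\<in>{m'..<n}. X i \<omega>)"
            unfolding S_def using True m' by (simp add: sum.atLeastLessThan_concat)
          moreover have "\<bar>S m n \<omega>\<bar> < e/2" "\<bar>S m m' \<omega>\<bar> < e/2"
            using m[rule_format, of n] m[rule_format, of m'] j True m' by linarith+
          ultimately show ?thesis unfolding real_norm_def by arith
        qed
      qed
    qed
  qed
qed

end



lemma (in prob_space) KL: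
  fixes \<Theta> :: "nat \<Rightarrow> 'a \<Rightarrow> 'd::euclidean_space" and \<mu> :: "'d measure"
  assumes ind: "indep_vars (\<lambda>_. borel) \<Theta> UNIV" and dk: "distr M borel (\<Theta> k) = \<mu>"
    and q: "\<And>y. measure \<mu> {y} \<le> q"
    and G: "G \<in> sets (PiM (UNIV - {k}) (\<lambda>_. borel :: 'd measure))"
    and h: "h \<in> measurable (PiM (UNIV - {k}) (\<lambda>_. borel)) (borel :: 'd measure)"
  shows "prob {\<omega>\<in>space M. restrict (\<lambda>i. \<Theta> i \<omega>) (UNIV - {k}) \<in> G \<and> \<Theta> k \<omega> = h (restrict (\<lambda>i. \<Theta> i \<omega>) (UNIV - {k}))}
         \<le> q * prob {\<omega>\<in>space M. restrict (\<lambda>i. \<Theta> i \<omega>) (UNIV - {k}) \<in> G}"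
proof -
  define P where "P = PiM (UNIV - {k}) (\<lambda>_. borel :: 'd measure)"
  define V where "V \<omega> = restrict (\<lambda>i. \<Theta> i \<omega>) (UNIV - {k})" for \<omega>
  have iv: "indep_var P V (PiM {k} (\<lambda>_. borel)) (\<lambda>\<omega>. restrict (\<lambda>i. \<Theta> i \<omega>) {k})"
    unfolding V_def P_def by (rule indep_var_restrict[OF ind]) auto
  define W where "W \<omega> = restrict (\<lambda>i. \<Theta> i \<omega>) {k}" for \<omega>
  define Q where "Q = PiM {k} (\<lambda>_. borel :: 'd measure)"
  have iv3: "indep_var P V Q W" using iv unfolding W_def Q_def .
  have Vm: "V \<in> measurable M P" and Wm: "W \<in> measurable M Q"
    using indep_var_rv1[OF iv3] indep_var_rv2[OF iv3] by auto
  have Tk: "\<Theta> k \<in> measurable M borel" using ind unfolding indep_vars_def by auto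
  have eq: "distr M P V \<Otimes>\<^sub>M distr M Q W = distr M (P \<Otimes>\<^sub>M Q) (\<lambda>\<omega>. (V \<omega>, W \<omega>))"
    using iv3 by (simp add: indep_var_distribution_eq)
  interpret mu: prob_space \<mu> unfolding dk[symmetric] by (rule prob_space_distr[OF Tk])
  interpret nu: prob_space "distr M P V" by (rule prob_space_distr[OF Vm])
  interpret wu: prob_space "distr M Q W" by (rule prob_space_distr[OF Wm])
  have ev: "(\<lambda>w. w k) \<in> measurable Q (borel :: 'd measure)"
    unfolding Q_def by (rule measurable_component_singleton) auto
  have q0: "0 \<le> q" using q[of 0] measure_nonneg[of \<mu> "{0}"] by linarith
  define H where "H = {p \<in> space (P \<Otimes>\<^sub>M Q). fst p \<in> G \<and> snd p k = h (fst p)}"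
  have Gs: "G \<in> sets P" using G unfolding P_def .
  have hm: "h \<in> measurable P borel" using h unfolding P_def .
  have Hm: "H \<in> sets (P \<Otimes>\<^sub>M Q)" unfolding H_def using Gs hm ev by measurable
  have pre: "{\<omega>\<in>space M. V \<omega> \<in> G \<and> \<Theta> k \<omega> = h (V \<omega>)} = (\<lambda>\<omega>. (V \<omega>, W \<omega>)) -` H \<inter> space M"
    using measurable_space[OF Vm] measurable_space[OF Wm] by (auto simp: H_def space_pair_measure W_def)
  have pre2: "{\<omega>\<in>space M. V \<omega> \<in> G} = V -` G \<inter> space M" by auto
  have "emeasure M {\<omega>\<in>space M. V \<omega> \<in> G \<and> \<Theta> k \<omega> = h (V \<omega>)}
      = emeasure (distr M (P \<Otimes>\<^sub>M Q) (\<lambda>\<omega>. (V \<omega>, W \<omega>))) H"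
    unfolding pre by (rule emeasure_distr[symmetric]) (use Vm Wm Hm in auto)
  also have "\<dots> = emeasure (distr M P V \<Otimes>\<^sub>M distr M Q W) H" unfolding eq ..
  also have "\<dots> = (\<integral>\<^sup>+v. emeasure (distr M Q W) (Pair v -` H) \<partial>distr M P V)"
    by (rule wu.emeasure_pair_measure_alt) (use Hm in simp)
  also have "\<dots> \<le> (\<integral>\<^sup>+v. ennreal q * indicator G v \<partial>distr M P V)"
  proof (rule nn_integral_mono)
    fix v assume v: "v \<in> space (distr M P V)"
    show "emeasure (distr M Q W) (Pair v -` H) \<le> ennreal q * indicator G v"
    proof (cases "v \<in> G")
      case True
      then have "Pair v -` H = {w \<in> space Q. w k = h v}" using v by (auto simp: H_def space_pair_measure)
      moreover have "{w \<in> space Q. w k = h v} \<in> sets Q" using ev by measurable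
      moreover have "W -` {w \<in> space Q. w k = h v} \<inter> space M = \<Theta> k -` {h v} \<inter> space M"
        using measurable_space[OF Wm] by (auto simp: W_def)
      moreover have "emeasure M (\<Theta> k -` {h v} \<inter> space M) = emeasure \<mu> {h v}"
        unfolding dk[symmetric] by (subst emeasure_distr[OF Tk]) auto
      ultimately have "emeasure (distr M Q W) (Pair v -` H) = emeasure \<mu> {h v}"
        by (simp add: emeasure_distr[OF Wm])
      then show ?thesis using True q[of "h v"] by (simp add: mu.emeasure_eq_measure ennreal_leI)
    next
      case False
      then have "Pair v -` H = {}" by (auto simp: H_def)
      then show ?thesis by simp
    qed
  qed
  also have "\<dots> = ennreal q * emeasure (distr M P V) G"
    by (rule nn_integral_cmult_indicator) (use Gs in simp)
  also have "\<dots> = ennreal q * emeasure M {\<omega>\<in>space M. V \<omega> \<in> G}"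
    unfolding pre2 by (subst emeasure_distr[OF Vm]) (use Gs in auto)
  finally have "ennreal (prob {\<omega>\<in>space M. V \<omega> \<in> G \<and> \<Theta> k \<omega> = h (V \<omega>)})
      \<le> ennreal (q * prob {\<omega>\<in>space M. V \<omega> \<in> G})"
    by (simp add: emeasure_eq_measure ennreal_mult q0)
  then show ?thesis unfolding V_def using q0 by (simp add: ennreal_le_iff)
qed




locale setting = prob_space M for M :: "'a measure" +
  fixes \<mu> :: "'d::euclidean_space measure" and \<Theta> :: "nat \<Rightarrow> 'a \<Rightarrow> 'd" and r :: "nat \<Rightarrow> real"
  assumes mu: "prob_space \<mu>"
    and smu: "sets \<mu> = sets borel"
    and nd: "\<mu> \<noteq> return borel 0"
    and i2: "integrable \<mu> (\<lambda>x. (norm x)\<^sup>2)"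
    and i1: "integrable \<mu> (\<lambda>x. x)"
    and m0: "(\<integral>x. x \<partial>\<mu>) = 0"
    and Tm[measurable]: "\<And>n. \<Theta> n \<in> borel_measurable M"
    and ind: "indep_vars (\<lambda>_. borel) \<Theta> UNIV"
    and dist: "\<And>n. distr M borel (\<Theta> n) = \<mu>"
    and r2: "summable (\<lambda>n. (r n)\<^sup>2)"
    and inf: "infinite {n. r n \<noteq> 0}"
begin

lemma part1: "AE \<omega> in M. summable (\<lambda>n. r n *\<^sub>R \<Theta> n \<omega>)"
proof -
  have smu'[measurable_cong]: "sets \<mu> = sets borel" by (rule smu)
  have each: "AE \<omega> in M. summable (\<lambda>i. r i * (\<Theta> i \<omega> \<bullet> b))" if b: "b \<in> Basis" for b
  proof -
    define X where "X i \<omega> = r i * (\<Theta> i \<omega> \<bullet> b)" for i \<omega>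
    have indX: "indep_vars (\<lambda>_. borel) X UNIV"
      unfolding X_def by (rule indep_vars_compose2[OF ind]) measurable
    have ib: "integrable \<mu> (\<lambda>x. x \<bullet> b)" using i1 by auto
    have ib2: "integrable \<mu> (\<lambda>x. (x \<bullet> b)\<^sup>2)"
    proof (rule Bochner_Integration.integrable_bound[OF i2])
      have "(\<lambda>x. (x \<bullet> b)\<^sup>2) \<in> borel_measurable (borel :: 'd measure)" by measurable
      then show "(\<lambda>x. (x \<bullet> b)\<^sup>2) \<in> borel_measurable \<mu>" using measurable_cong_sets[OF smu refl] by blast
      show "AE x in \<mu>. norm ((x \<bullet> b)\<^sup>2) \<le> norm ((norm x)\<^sup>2)"
        using Basis_le_norm[OF b] by (auto intro!: AE_I2) (metis abs_ge_zero power2_abs power_mono)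
    qed
    have intX: "integrable M (X i)" for i
    proof -
      have "integrable M (\<lambda>\<omega>. \<Theta> i \<omega> \<bullet> b)"
        using ib unfolding dist[of i, symmetric] by (subst (asm) integrable_distr_eq) auto
      then show ?thesis unfolding X_def by auto
    qed
    have meanX: "expectation (X i) = 0" for i
    proof -
      have "expectation (\<lambda>\<omega>. \<Theta> i \<omega> \<bullet> b) = (\<integral>x. x \<bullet> b \<partial>\<mu>)"
        unfolding dist[of i, symmetric] by (subst integral_distr) auto
      also have "\<dots> = 0" using i1 m0 by simp
      finally show ?thesis unfolding X_def by simp
    qed
    define c where "c = (\<integral>x. (x \<bullet> b)\<^sup>2 \<partial>\<mu>)"
    have intX2: "integrable M (\<lambda>\<omega>. (X i \<omega>)\<^sup>2) \<and> expectation (\<lambda>\<omega>. (X i \<omega>)\<^sup>2) = (r i)\<^sup>2 * c" for i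
    proof -
      have "integrable M (\<lambda>\<omega>. (\<Theta> i \<omega> \<bullet> b)\<^sup>2)"
        using ib2 unfolding dist[of i, symmetric] by (subst (asm) integrable_distr_eq) auto
      moreover have "expectation (\<lambda>\<omega>. (\<Theta> i \<omega> \<bullet> b)\<^sup>2) = c"
        unfolding c_def dist[of i, symmetric] by (subst integral_distr) auto
      ultimately show ?thesis unfolding X_def by (simp add: power_mult_distrib)
    qed
    interpret kolm M X
      by unfold_locales (use indX intX meanX intX2 in auto)
    have "summable (\<lambda>i. expectation (\<lambda>\<omega>. (X i \<omega>)\<^sup>2))"
      using intX2 summable_mult2[OF r2, of c] by simp
    from kolm_as[OF this] show ?thesis unfolding X_def .
  qed
  have "AE \<omega> in M. \<forall>b\<in>Basis. summable (\<lambda>i. r i * (\<Theta> i \<omega> \<bullet> b))"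
    by (rule AE_finite_allI) (auto intro: each)
  then show ?thesis
  proof (rule AE_mp, intro AE_I2 impI)
    fix \<omega> assume H: "\<forall>b\<in>Basis. summable (\<lambda>i. r i * (\<Theta> i \<omega> \<bullet> b))"
    have eq: "(\<lambda>n. r n *\<^sub>R \<Theta> n \<omega>) = (\<lambda>n. \<Sum>b\<in>Basis. (r n * (\<Theta> n \<omega> \<bullet> b)) *\<^sub>R b)"
    proof
      fix n
      have "r n *\<^sub>R \<Theta> n \<omega> = (\<Sum>b\<in>Basis. ((r n *\<^sub>R \<Theta> n \<omega>) \<bullet> b) *\<^sub>R b)"
        by (rule euclidean_representation[symmetric])
      then show "r n *\<^sub>R \<Theta> n \<omega> = (\<Sum>b\<in>Basis. (r n * (\<Theta> n \<omega> \<bullet> b)) *\<^sub>R b)" by simp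
    qed
    show "summable (\<lambda>n. r n *\<^sub>R \<Theta> n \<omega>)"
      unfolding eq by (intro summable_sum summable_scaleR_left) (use H in auto)
  qed
qed

end



context setting begin

lemma atom_bound: "\<exists>q<1. \<forall>y. measure \<mu> {y} \<le> q"
proof -
  interpret mu: prob_space \<mu> by (rule mu)
  have sp: "space \<mu> = UNIV" using sets_eq_imp_space_eq[OF smu] by simp
  have sing: "{y} \<in> sets \<mu>" for y using smu by simp
  have lt1: "measure \<mu> {y} < 1" for y
  proof (rule ccontr)
    assume "\<not> measure \<mu> {y} < 1"
    then have one: "measure \<mu> {y} = 1" using mu.prob_le_1[of "{y}"] by linarith
    have ret: "\<mu> = return borel y"
    proof (rule measure_eqI)
      show "sets \<mu> = sets (return borel y)" using smu by simp
      fix A assume A: "A \<in> sets \<mu>"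
      then have Ab: "A \<in> sets borel" using smu by simp
      show "emeasure \<mu> A = emeasure (return borel y) A"
      proof (cases "y \<in> A")
        case True
        have "measure \<mu> {y} \<le> measure \<mu> A" using A True sing by (intro mu.finite_measure_mono) auto
        then have "measure \<mu> A = 1" using one mu.prob_le_1[of A] by linarith
        then show ?thesis using Ab True by (simp add: mu.emeasure_eq_measure)
      next
        case False
        have "measure \<mu> A \<le> measure \<mu> (space \<mu> - {y})"
          using A False sets.Diff[OF sets.top sing[of y]] sets.sets_into_space[OF A]
          by (intro mu.finite_measure_mono) auto
        also have "\<dots> = 1 - measure \<mu> {y}" by (rule mu.prob_compl[OF sing])
        finally have "measure \<mu> A = 0" using one measure_nonneg[of \<mu> A] by linarith
        then show ?thesis using Ab False by (simp add: mu.emeasure_eq_measure)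
      qed
    qed
    have "(\<integral>x. x \<partial>\<mu>) = y" unfolding ret by (rule integral_return) auto
    then have "y = 0" using m0 by simp
    then show False using nd ret by simp
  qed
  show ?thesis
  proof (cases "\<exists>y0. measure \<mu> {y0} > 1/2")
    case True
    then obtain y0 where y0: "measure \<mu> {y0} > 1/2" by auto
    have "measure \<mu> {y} \<le> max (1/2) (measure \<mu> {y0})" for y
    proof (cases "y = y0")
      case False
      have "measure \<mu> ({y} \<union> {y0}) = measure \<mu> {y} + measure \<mu> {y0}"
        using False sing by (intro mu.finite_measure_Union) auto
      moreover have "measure \<mu> ({y} \<union> {y0}) \<le> 1" by (rule mu.prob_le_1)
      ultimately show ?thesis using y0 by linarith
    qed simp
    moreover have "max (1/2) (measure \<mu> {y0}) < 1" using lt1[of y0] by simp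
    ultimately show ?thesis by blast
  next
    case False
    then show ?thesis by (intro exI[of _ "1/2"]) (auto simp: not_less)
  qed
qed

end



context setting begin

lemma part2: "measure M {\<omega> \<in> space M. (\<lambda>n. r n *\<^sub>R \<Theta> n \<omega>) sums x} = 0"
proof -
  obtain q where q1: "q < 1" and q: "\<And>y. measure \<mu> {y} \<le> q" using atom_bound by auto
  have q0: "0 \<le> q" using q[of 0] measure_nonneg[of \<mu> "{0}"] by linarith
  obtain N0 where N0: "N0 \<in> null_sets M" and N0s: "{\<omega>\<in>space M. \<not> summable (\<lambda>n. r n *\<^sub>R \<Theta> n \<omega>)} \<subseteq> N0"
    using part1 by (auto simp: eventually_ae_filter)
  have N0m: "N0 \<in> events" and pN0: "prob N0 = 0" using N0 by (auto simp: emeasure_eq_measure)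
  define B where "B = {\<omega> \<in> space M. (\<lambda>n. r n *\<^sub>R \<Theta> n \<omega>) sums x}"
  show ?thesis
  proof (cases "B \<in> events")
    case False then show ?thesis unfolding B_def[symmetric] by (rule measure_notin_sets)
  next
    case True
    note Bm = True
    define Sf where "Sf \<omega> = (\<Sum>n. r n *\<^sub>R \<Theta> n \<omega>)" for \<omega>
    define A where "A n \<omega> = (\<Sum>i<n. r i *\<^sub>R \<Theta> i \<omega>)" for n \<omega>
    have Sfm[measurable]: "Sf \<in> borel_measurable M" unfolding Sf_def by measurable
    have Am[measurable]: "A n \<in> borel_measurable M" for n unfolding A_def by measurable
    define D where "D n \<delta> = {\<omega>\<in>space M. \<exists>m. \<delta> \<le> dist (Sf \<omega>) (A (n + m) \<omega>)}" for n \<delta>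
    define E where "E \<delta> = {\<omega>\<in>space M. Sf \<omega> \<noteq> x \<and> dist (Sf \<omega>) x < 2 * \<delta>}" for \<delta>
    have Dm: "D n \<delta> \<in> events" for n \<delta> unfolding D_def by measurable
    have Em: "E \<delta> \<in> events" for \<delta> unfolding E_def by measurable
    have sumsS: "(\<lambda>n. r n *\<^sub>R \<Theta> n \<omega>) sums Sf \<omega>" if "\<omega> \<in> space M" "\<omega> \<notin> N0" for \<omega>
      using that N0s unfolding Sf_def by (auto intro!: summable_sums)
    have main: "(1 - q) * prob B \<le> 2 * prob (D n \<delta>) + prob (E \<delta>)" if \<delta>: "\<delta> > 0" for n \<delta>
    proof -
      obtain k where k: "k \<ge> n" "r k \<noteq> 0" using inf by (auto simp: infinite_nat_iff_unbounded_le)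
      define C where "C = {\<omega>\<in>space M. dist (A n \<omega>) x < \<delta>}"
      have Cm: "C \<in> events" unfolding C_def by measurable
      define PP where "PP = PiM (UNIV - {k}) (\<lambda>_. borel :: 'd measure)"
      define G where "G = {v \<in> space PP. dist (\<Sum>i<n. r i *\<^sub>R v i) x < \<delta>}"
      define h where "h v = inverse (r k) *\<^sub>R (x - (\<Sum>i. if i = k then 0 else r i *\<^sub>R v i))" for v :: "nat \<Rightarrow> 'd"
      have fm[measurable]: "(\<lambda>v. \<Sum>i<n. r i *\<^sub>R (v i :: 'd)) \<in> borel_measurable PP"
        unfolding PP_def by (rule meas_sum_coord) (use k in auto)
      have Gm: "G \<in> sets PP" unfolding G_def by measurable
      have tm: "(\<lambda>v. if i = k then 0 else r i *\<^sub>R (v i :: 'd)) \<in> borel_measurable PP" for i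
      proof (cases "i = k")
        case False
        then have "(\<lambda>v. v i) \<in> measurable PP (borel :: 'd measure)"
          unfolding PP_def by (intro measurable_component_singleton) auto
        then show ?thesis using False by simp
      qed simp
      have sm[measurable]: "(\<lambda>v. \<Sum>i. if i = k then 0 else r i *\<^sub>R (v i :: 'd)) \<in> borel_measurable PP"
        by (rule borel_measurable_suminf[OF tm])
      have hm: "h \<in> borel_measurable PP" unfolding h_def by measurable
      define V where "V \<omega> = restrict (\<lambda>i. \<Theta> i \<omega>) (UNIV - {k})" for \<omega>
      have Vm[measurable]: "V \<in> measurable M PP" unfolding V_def PP_def by measurable
      have AV: "(\<Sum>i<n. r i *\<^sub>R V \<omega> i) = A n \<omega>" for \<omega>
        using k by (auto simp: V_def A_def intro!: sum.cong)
      have CG: "{\<omega>\<in>space M. V \<omega> \<in> G} = C"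
        using measurable_space[OF Vm] by (auto simp: G_def C_def AV)
      have BC: "B \<inter> C \<subseteq> {\<omega>\<in>space M. V \<omega> \<in> G \<and> \<Theta> k \<omega> = h (V \<omega>)}"
      proof
        fix \<omega> assume w: "\<omega> \<in> B \<inter> C"
        then have ws: "\<omega> \<in> space M" and s: "(\<lambda>i. r i *\<^sub>R \<Theta> i \<omega>) sums x" by (auto simp: B_def)
        have "V \<omega> \<in> G" using w CG by auto
        moreover
        have "(\<lambda>i. r i *\<^sub>R \<Theta> i \<omega> - (if i = k then r i *\<^sub>R \<Theta> i \<omega> else 0)) sums (x - r k *\<^sub>R \<Theta> k \<omega>)"
          by (rule sums_diff[OF s sums_single[of k "\<lambda>i. r i *\<^sub>R \<Theta> i \<omega>"]])
        moreover have "(\<lambda>i. r i *\<^sub>R \<Theta> i \<omega> - (if i = k then r i *\<^sub>R \<Theta> i \<omega> else 0))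
            = (\<lambda>i. if i = k then 0 else r i *\<^sub>R V \<omega> i)"
          by (auto simp: V_def fun_eq_iff)
        ultimately have "(\<Sum>i. if i = k then 0 else r i *\<^sub>R V \<omega> i) = x - r k *\<^sub>R \<Theta> k \<omega>"
          by (auto dest: sums_unique)
        then have "h (V \<omega>) = \<Theta> k \<omega>" using k by (simp add: h_def)
        with \<open>V \<omega> \<in> G\<close> ws show "\<omega> \<in> {\<omega>\<in>space M. V \<omega> \<in> G \<and> \<Theta> k \<omega> = h (V \<omega>)}" by auto
      qed
      have KLs: "{\<omega>\<in>space M. V \<omega> \<in> G \<and> \<Theta> k \<omega> = h (V \<omega>)} \<in> events"
        using Gm hm by measurable
      have "prob {\<omega>\<in>space M. V \<omega> \<in> G \<and> \<Theta> k \<omega> = h (V \<omega>)} \<le> q * prob {\<omega>\<in>space M. V \<omega> \<in> G}"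
        unfolding V_def by (rule KL[OF ind dist q Gm[unfolded PP_def] hm[unfolded PP_def]])
      then have pBC: "prob (B \<inter> C) \<le> q * prob C"
        unfolding CG using finite_measure_mono[OF BC KLs] by linarith
      have BmC: "B - C \<subseteq> D n \<delta>"
      proof
        fix \<omega> assume w: "\<omega> \<in> B - C"
        then have ws: "\<omega> \<in> space M" and s: "(\<lambda>i. r i *\<^sub>R \<Theta> i \<omega>) sums x" by (auto simp: B_def)
        then have "Sf \<omega> = x" unfolding Sf_def by (simp add: sums_unique[symmetric])
        then show "\<omega> \<in> D n \<delta>" using w ws unfolding D_def C_def
          by (auto intro!: exI[of _ 0] simp: dist_commute not_less)
      qed
      have CmB: "C - B \<subseteq> N0 \<union> D n \<delta> \<union> E \<delta>"
      proof
        fix \<omega> assume w: "\<omega> \<in> C - B"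
        then have ws: "\<omega> \<in> space M" and c: "dist (A n \<omega>) x < \<delta>" by (auto simp: C_def)
        show "\<omega> \<in> N0 \<union> D n \<delta> \<union> E \<delta>"
        proof (cases "\<omega> \<in> N0")
          case False
          then have "(\<lambda>n. r n *\<^sub>R \<Theta> n \<omega>) sums Sf \<omega>" using sumsS ws by auto
          then have ne: "Sf \<omega> \<noteq> x" using w ws by (auto simp: B_def)
          show ?thesis
          proof (cases "\<delta> \<le> dist (Sf \<omega>) (A n \<omega>)")
            case True then have "\<omega> \<in> D n \<delta>" using ws unfolding D_def by (auto intro!: exI[of _ 0])
            then show ?thesis by auto
          next
            case False
            then have "dist (Sf \<omega>) x < 2 * \<delta>"
              using c dist_triangle[of "Sf \<omega>" x "A n \<omega>"] by (simp add: dist_commute)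
            then show ?thesis using ne ws by (auto simp: E_def)
          qed
        qed auto
      qed
      have p1: "prob B \<le> prob (B \<inter> C) + prob (B - C)"
      proof -
        have "B \<inter> C \<union> (B - C) = B" by blast
        then show ?thesis using measure_Un_le[where M=M and A="B \<inter> C" and B="B - C"] Bm Cm by simp
      qed
      have p2: "prob (B - C) \<le> prob (D n \<delta>)" using BmC Dm by (rule finite_measure_mono)
      have p3: "prob C \<le> prob B + prob (C - B)"
        using measure_Un_le[where M=M and A=B and B="C - B"] Bm Cm finite_measure_mono[of C "B \<union> (C - B)"] by auto
      have p4: "prob (C - B) \<le> prob (N0 \<union> D n \<delta> \<union> E \<delta>)"
        using CmB N0m Dm Em by (intro finite_measure_mono) auto
      have p5: "prob (N0 \<union> D n \<delta> \<union> E \<delta>) \<le> prob N0 + prob (D n \<delta>) + prob (E \<delta>)"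
        using measure_Un_le[where M=M and A="N0 \<union> D n \<delta>" and B="E \<delta>"] measure_Un_le[where M=M and A=N0 and B="D n \<delta>"] N0m Dm Em
        by auto
      have "q * prob (D n \<delta>) \<le> prob (D n \<delta>)" using q0 q1 by (intro mult_left_le_one_le) auto
      moreover have "q * prob (E \<delta>) \<le> prob (E \<delta>)" using q0 q1 by (intro mult_left_le_one_le) auto
      moreover have "q * prob C \<le> q * (prob B + prob (D n \<delta>) + prob (E \<delta>))"
        using p3 p4 p5 pN0 q0 by (intro mult_left_mono) auto
      ultimately show ?thesis using p1 p2 pBC by (simp add: algebra_simps)
    qed
    have Dlim: "(\<lambda>n. prob (D n \<delta>)) \<longlonglongrightarrow> 0" if \<delta>: "\<delta> > 0" for \<delta>
    proof -
      have dec: "decseq (\<lambda>n. D n \<delta>)"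
      proof (rule decseq_SucI, rule subsetI)
        fix n \<omega> assume "\<omega> \<in> D (Suc n) \<delta>"
        then obtain m where "\<omega> \<in> space M" "\<delta> \<le> dist (Sf \<omega>) (A (Suc n + m) \<omega>)" by (auto simp: D_def)
        then show "\<omega> \<in> D n \<delta>" unfolding D_def by (auto intro!: exI[of _ "Suc m"])
      qed
      have "(\<Inter>n. D n \<delta>) \<subseteq> N0"
      proof
        fix \<omega> assume w: "\<omega> \<in> (\<Inter>n. D n \<delta>)"
        then have ws: "\<omega> \<in> space M" by (auto simp: D_def)
        show "\<omega> \<in> N0"
        proof (rule ccontr)
          assume "\<omega> \<notin> N0"
          then have "(\<lambda>n. r n *\<^sub>R \<Theta> n \<omega>) sums Sf \<omega>" using sumsS ws by auto
          then have "(\<lambda>j. A j \<omega>) \<longlonglongrightarrow> Sf \<omega>" unfolding A_def sums_def .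
          then obtain N where N: "\<forall>j\<ge>N. dist (A j \<omega>) (Sf \<omega>) < \<delta>"
            using \<delta> by (auto simp: lim_sequentially)
          from w obtain m where "\<delta> \<le> dist (Sf \<omega>) (A (N + m) \<omega>)" by (auto simp: D_def)
          then show False using N[rule_format, of "N + m"] by (simp add: dist_commute)
        qed
      qed
      then have "prob (\<Inter>n. D n \<delta>) \<le> prob N0"
        using N0m by (intro finite_measure_mono) auto
      then have "prob (\<Inter>n. D n \<delta>) = 0" using pN0 measure_nonneg[of M "\<Inter>n. D n \<delta>"] by linarith
      moreover have "(\<lambda>n. prob (D n \<delta>)) \<longlonglongrightarrow> prob (\<Inter>n. D n \<delta>)"
        using Dm dec by (intro finite_Lim_measure_decseq) auto
      ultimately show ?thesis by simp
    qed
    have Elim: "(\<lambda>j. prob (E (inverse (real (Suc j))))) \<longlonglongrightarrow> 0"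
    proof -
      have dec: "decseq (\<lambda>j. E (inverse (real (Suc j))))"
      proof (rule decseq_SucI, rule subsetI)
        fix j \<omega> assume w: "\<omega> \<in> E (inverse (real (Suc (Suc j))))"
        have le: "inverse (real (Suc (Suc j))) \<le> inverse (real (Suc j))"
          by (rule le_imp_inverse_le) auto
        from w have w1: "\<omega> \<in> space M" "Sf \<omega> \<noteq> x" and w2: "dist (Sf \<omega>) x < 2 * inverse (real (Suc (Suc j)))"
          unfolding E_def by blast+
        from w2 le have "dist (Sf \<omega>) x < 2 * inverse (real (Suc j))" by linarith
        with w1 show "\<omega> \<in> E (inverse (real (Suc j)))" unfolding E_def by blast
      qed
      have "(\<Inter>j. E (inverse (real (Suc j)))) = {}"
      proof (rule ccontr)
        assume "(\<Inter>j. E (inverse (real (Suc j)))) \<noteq> {}"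
        then obtain \<omega> where w: "\<And>j. \<omega> \<in> E (inverse (real (Suc j)))" by auto
        then have ne: "Sf \<omega> \<noteq> x" by (auto simp: E_def)
        then have "dist (Sf \<omega>) x / 2 > 0" by simp
        then obtain j where j: "inverse (real (Suc j)) < dist (Sf \<omega>) x / 2"
          using reals_Archimedean by blast
        from w[of j] have "dist (Sf \<omega>) x < 2 * inverse (real (Suc j))" by (auto simp: E_def)
        with j show False by linarith
      qed
      moreover have "(\<lambda>j. prob (E (inverse (real (Suc j))))) \<longlonglongrightarrow> prob (\<Inter>j. E (inverse (real (Suc j))))"
        using Em dec by (intro finite_Lim_measure_decseq) auto
      ultimately show ?thesis by simp
    qed
    have step: "(1 - q) * prob B \<le> prob (E (inverse (real (Suc j))))" for j
    proof -
      have pos: "inverse (real (Suc j)) > 0" by simp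
      have "(\<lambda>n. 2 * prob (D n (inverse (real (Suc j)))) + prob (E (inverse (real (Suc j)))))
             \<longlonglongrightarrow> 2 * 0 + prob (E (inverse (real (Suc j))))"
        by (intro tendsto_intros Dlim pos)
      then show ?thesis using main[OF pos] by (intro LIMSEQ_le_const) auto
    qed
    have "(1 - q) * prob B \<le> 0"
      by (rule LIMSEQ_le_const[OF Elim]) (use step in auto)
    then have "prob B \<le> 0" using q1 by (simp add: mult_le_0_iff)
    then show ?thesis using measure_nonneg[of M B] unfolding B_def by linarith
  qed
qed

end

theorem lemma2p5:
  fixes M :: "'a measure"
    and \<mu> :: "'d::euclidean_space measure"
    and \<Theta> :: "nat \<Rightarrow> 'a \<Rightarrow> 'd"
    and r :: "nat \<Rightarrow> real"
  assumes "prob_space M"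
    and "prob_space \<mu>"
    and "sets \<mu> = sets borel"
    and "\<mu> \<noteq> return borel 0"
    and "integrable \<mu> (\<lambda>x. (norm x)\<^sup>2)"
    and "integrable \<mu> (\<lambda>x. x)"
    and "(\<integral>x. x \<partial>\<mu>) = 0"
    and "\<And>n. \<Theta> n \<in> borel_measurable M"
    and "prob_space.indep_vars M (\<lambda>_. borel) \<Theta> UNIV"
    and "\<And>n. distr M borel (\<Theta> n) = \<mu>"
    and "summable (\<lambda>n. (r n)\<^sup>2)"
    and "infinite {n. r n \<noteq> 0}"
  shows "(AE \<omega> in M. summable (\<lambda>n. r n *\<^sub>R \<Theta> n \<omega>))
     \<and> (\<forall>x. measure M {\<omega> \<in> space M. (\<lambda>n. r n *\<^sub>R \<Theta> n \<omega>) sums x} = 0)"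
  proof -
  interpret setting M \<mu> \<Theta> r
    by (intro setting.intro setting_axioms.intro) (rule assms)+
  show ?thesis using part1 part2 by auto
qed

end
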